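(* Let $G$ be a chordal graph and $(T,\mathcal{S})$ a subtree model of $G$. Let $C,C',C''$ be three distinct maximal cliques of $G$. If the clique subtree $S_T(C')$ intersects the connecting path $p(S_T(C),S_T(C''))$, then $C'$ is a separator in $G$ (i.e. some two vertices of $G-C'$ lie in different connected components of $G-C'$).
   Context: A subtree model of a graph $G$ is a pair $(T,\mathcal{S})$ where $T$ is a tree and $\mathcal{S}=\{S_v \mid v\in V(G)\}$ is a family of connected subtrees of $T$ such that for any two distinct vertices $u,v$, $S_u\cap S_v\neq\emptyset$ iff $uv\in E(G)$. For a maximal clique $C$ of $G$, the clique subtree is $S_T(C)=\bigcap_{v\in C}S_v$; by the Helly property it is nonempty, and clique subtrees of distinct maximal cliques are disjoint. For two disjoint subtrees $S,S'$ of $T$, the connecting path $p(S,S')$ is the minimal subgraph $P$ of $T$ (a path) such that $S\cup S'\cup P$ is connected; it contains exactly one node of $S$ and one node of $S'$. *)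

theory Defs
  imports Main
begin

definition simple_graph :: "'a set \<Rightarrow> ('a \<Rightarrow> 'a \<Rightarrow> bool) \<Rightarrow> bool" where
  "simple_graph V E \<longleftrightarrow> finite V \<and> (\<forall>u v. E u v \<longrightarrow> u \<in> V \<and> v \<in> V)
     \<and> (\<forall>u v. E u v \<longrightarrow> E v u) \<and> (\<forall>v. \<not> E v v)"

definition is_path :: "('a \<Rightarrow> 'a \<Rightarrow> bool) \<Rightarrow> 'a list \<Rightarrow> bool" where
  "is_path E xs \<longleftrightarrow> xs \<noteq> [] \<and> distinct xs \<and>
     (\<forall>i. Suc i < length xs \<longrightarrow> E (xs ! i) (xs ! Suc i))"

definition connected_set :: "('a \<Rightarrow> 'a \<Rightarrow> bool) \<Rightarrow> 'a set \<Rightarrow> bool" where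
  "connected_set E A \<longleftrightarrow> (\<forall>x\<in>A. \<forall>y\<in>A. \<exists>xs. is_path E xs \<and> set xs \<subseteq> A \<and> hd xs = x \<and> last xs = y)"

definition is_tree :: "'b set \<Rightarrow> ('b \<Rightarrow> 'b \<Rightarrow> bool) \<Rightarrow> bool" where
  "is_tree N F \<longleftrightarrow> simple_graph N F \<and> N \<noteq> {} \<and> connected_set F N \<and>
     (\<forall>xs. is_path F xs \<and> 3 \<le> length xs \<longrightarrow> \<not> F (last xs) (hd xs))"

(* chordal: every cycle of length at least 4 has a chord *)
definition chordal :: "'a set \<Rightarrow> ('a \<Rightarrow> 'a \<Rightarrow> bool) \<Rightarrow> bool" where
  "chordal V E \<longleftrightarrow> (\<forall>xs. is_path E xs \<and> set xs \<subseteq> V \<and> 4 \<le> length xs \<and> E (last xs) (hd xs) \<longrightarrow>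
     (\<exists>i j. i < j \<and> j < length xs \<and> j \<noteq> Suc i \<and> \<not> (i = 0 \<and> j = length xs - 1)
            \<and> E (xs ! i) (xs ! j)))"

definition is_clique :: "'a set \<Rightarrow> ('a \<Rightarrow> 'a \<Rightarrow> bool) \<Rightarrow> 'a set \<Rightarrow> bool" where
  "is_clique V E C \<longleftrightarrow> C \<subseteq> V \<and> (\<forall>u\<in>C. \<forall>v\<in>C. u \<noteq> v \<longrightarrow> E u v)"

definition maximal_clique :: "'a set \<Rightarrow> ('a \<Rightarrow> 'a \<Rightarrow> bool) \<Rightarrow> 'a set \<Rightarrow> bool" where
  "maximal_clique V E C \<longleftrightarrow> is_clique V E C \<and> (\<forall>D. is_clique V E D \<and> C \<subseteq> D \<longrightarrow> D = C)"

definition subtree_model :: "'a set \<Rightarrow> ('a \<Rightarrow> 'a \<Rightarrow> bool) \<Rightarrow> 'b set \<Rightarrow> ('b \<Rightarrow> 'b \<Rightarrow> bool)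
    \<Rightarrow> ('a \<Rightarrow> 'b set) \<Rightarrow> bool" where
  "subtree_model V E N F S \<longleftrightarrow> is_tree N F \<and>
     (\<forall>v\<in>V. S v \<noteq> {} \<and> S v \<subseteq> N \<and> connected_set F (S v)) \<and>
     (\<forall>u\<in>V. \<forall>v\<in>V. u \<noteq> v \<longrightarrow> (S u \<inter> S v \<noteq> {} \<longleftrightarrow> E u v))"

definition clique_subtree :: "('a \<Rightarrow> 'b set) \<Rightarrow> 'a set \<Rightarrow> 'b set" where
  "clique_subtree S C = (\<Inter>v\<in>C. S v)"

definition connecting_path :: "('b \<Rightarrow> 'b \<Rightarrow> bool) \<Rightarrow> 'b set \<Rightarrow> 'b set \<Rightarrow> 'b set" where
  "connecting_path F A B = {x. \<exists>xs. is_path F xs \<and> hd xs \<in> A \<and> last xs \<in> B \<and>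
     (\<forall>i. 0 < i \<and> i < length xs - 1 \<longrightarrow> xs ! i \<notin> A \<union> B) \<and> x \<in> set xs}"

definition separator :: "'a set \<Rightarrow> ('a \<Rightarrow> 'a \<Rightarrow> bool) \<Rightarrow> 'a set \<Rightarrow> bool" where
  "separator V E C \<longleftrightarrow> (\<exists>u\<in>V - C. \<exists>w\<in>V - C.
     \<not> (\<exists>xs. is_path E xs \<and> set xs \<subseteq> V - C \<and> hd xs = u \<and> last xs = w))"

end

theory Submission
  imports Defs
begin

inductive walk :: "('b \<Rightarrow> 'b \<Rightarrow> bool) \<Rightarrow> 'b list \<Rightarrow> bool" for F where
  w1: "walk F [x]"
| w2: "walk F (y # xs) \<Longrightarrow> x = y \<or> F x y \<Longrightarrow> walk F (x # y # xs)"

lemma walk_nonempty: "walk F W \<Longrightarrow> W \<noteq> []"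
  by (induction rule: walk.induct) auto

lemma walk_append:
  "walk F xs \<Longrightarrow> walk F ys \<Longrightarrow> last xs = hd ys \<or> F (last xs) (hd ys) \<Longrightarrow> walk F (xs @ ys)"
proof (induction rule: walk.induct)
  case (w1 x)
  then show ?case using walk_nonempty[OF w1(1)]
    by (cases ys) (auto intro: walk.w2)
next
  case (w2 y xs x)
  then show ?case by (auto intro: walk.w2)
qed

lemma path_walk: "is_path F P \<Longrightarrow> walk F P"
proof (induction P)
  case Nil then show ?case by (simp add: is_path_def)
next
  case (Cons x P)
  show ?case
  proof (cases P)
    case Nil then show ?thesis by (simp add: walk.w1)
  next
    case (Cons y P2)
    have "is_path F P" using Cons.prems Cons unfolding is_path_def by auto
    moreover have "F x y" using Cons.prems Cons unfolding is_path_def by force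
    ultimately show ?thesis using Cons.IH Cons by (auto intro: walk.w2)
  qed
qed

lemma path_tl: "is_path F (x # P) \<Longrightarrow> P \<noteq> [] \<Longrightarrow> is_path F P"
  unfolding is_path_def by auto

lemma path_take: "is_path F P \<Longrightarrow> 0 < n \<Longrightarrow> is_path F (take n P)"
  unfolding is_path_def by auto

lemma path_cons: "is_path F P \<Longrightarrow> F y (hd P) \<Longrightarrow> y \<notin> set P \<Longrightarrow> is_path F (y # P)"
  unfolding is_path_def
  by (auto simp: nth_Cons split: nat.splits) (metis hd_conv_nth)

lemma path_hd_last: "is_path F P \<Longrightarrow> hd P = last P \<Longrightarrow> P = [hd P]"
proof -
  assume a: "is_path F P" "hd P = last P"
  then have d: "distinct P" "P \<noteq> []" by (auto simp: is_path_def)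
  have "P ! 0 = P ! (length P - 1)" using a d by (simp add: hd_conv_nth last_conv_nth)
  then have "length P - 1 = 0" using d nth_eq_iff_index_eq by (metis diff_less length_greater_0_conv zero_less_one)
  then show ?thesis using d by (cases P) auto
qed

lemma walk_covers_path:
  assumes tree: "\<forall>xs. is_path F xs \<and> 3 \<le> length xs \<longrightarrow> \<not> F (last xs) (hd xs)"
    and sym: "\<forall>u v. F u v \<longrightarrow> F v u"
  shows "walk F W \<Longrightarrow> is_path F P \<Longrightarrow> hd P = hd W \<Longrightarrow> last P = last W \<Longrightarrow> set P \<subseteq> set W"
proof (induction W arbitrary: P rule: walk.induct)
  case (w1 x)
  then show ?case using path_hd_last[of F P] by (metis list.sel(1) last.simps set_eq_subset)
next
  case (w2 y xs x)
  show ?case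
  proof (cases "x = y")
    case True
    then show ?thesis using w2 by auto
  next
    case False
    then have Fxy: "F x y" using w2 by auto
    have Pne: "P \<noteq> []" using w2 by (simp add: is_path_def)
    then obtain P' where P: "P = x # P'" using w2.prems(2) by (cases P) auto
    show ?thesis
    proof (cases "P' = []")
      case True
      then show ?thesis using P by auto
    next
      case P'ne: False
      show ?thesis
      proof (cases "y \<in> set P")
        case False
        have "is_path F (y # P)" using path_cons[OF w2.prems(1)] False Fxy sym P by auto
        then have "set (y # P) \<subseteq> set (y # xs)" using w2 P'ne P by (intro w2.IH) auto
        then show ?thesis by auto
      next
        case True
        then obtain k where k: "k < length P" "P ! k = y" by (metis in_set_conv_nth)
        have "k \<noteq> 0"
        proof
          assume "k = 0"
          then have "y = x" using k(2) P by simp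
          then show False using \<open>x \<noteq> y\<close> by simp
        qed
        show ?thesis
        proof (cases "k = 1")
          case True
          then have "y = P' ! 0" using k(2) P by simp
          then have "y = hd P'" using P'ne by (metis hd_conv_nth)
          moreover have "is_path F P'" using path_tl[of F x P'] w2.prems(1) P'ne unfolding P by simp
          moreover have "last P' = last (y # xs)" using w2.prems(3) P'ne unfolding P by simp
          ultimately have "set P' \<subseteq> set (y # xs)" using w2.IH[of P'] by simp
          then show ?thesis using P by auto
        next
          case False
          then have k2: "2 \<le> k" using \<open>k \<noteq> 0\<close> by auto
          let ?Q = "take (Suc k) P"
          have "is_path F ?Q" using path_take w2.prems(1) by auto
          moreover have "3 \<le> length ?Q" using k k2 by auto
          moreover have "last ?Q = y" using k by (simp add: take_Suc_conv_app_nth)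
          moreover have "hd ?Q = x" using P by simp
          moreover have "F y x" using sym Fxy by blast
          ultimately have False using spec[OF tree, of ?Q] by simp
          then show ?thesis ..
        qed
      qed
    qed
  qed
qed

lemma graph_walk_tree_walk:
  assumes conn: "\<forall>v\<in>V. connected_set F (S v)"
    and adj: "\<forall>u\<in>V. \<forall>v\<in>V. u \<noteq> v \<longrightarrow> (S u \<inter> S v \<noteq> {} \<longleftrightarrow> E u v)"
  shows "walk E vs \<Longrightarrow> set vs \<subseteq> V \<Longrightarrow> t \<in> S (hd vs) \<Longrightarrow> t' \<in> S (last vs) \<Longrightarrow>
    \<exists>W. walk F W \<and> hd W = t \<and> last W = t' \<and> (\<forall>z\<in>set W. \<exists>v\<in>set vs. z \<in> S v)"
proof (induction vs arbitrary: t rule: walk.induct)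
  case (w1 x)
  then have "x \<in> V" by simp
  then obtain P where P: "is_path F P" "set P \<subseteq> S x" "hd P = t" "last P = t'"
    using conn w1 unfolding connected_set_def by force
  then show ?case using path_walk[OF P(1)] by auto
next
  case (w2 y xs x)
  show ?case
  proof (cases "x = y")
    case True
    then obtain W where "walk F W \<and> hd W = t \<and> last W = t' \<and> (\<forall>z\<in>set W. \<exists>v\<in>set (y # xs). z \<in> S v)"
      using w2.IH[of t] w2.prems by auto
    then show ?thesis by auto
  next
    case False
    then have Exy: "E x y" using w2.hyps by auto
    have xV: "x \<in> V" and yV: "y \<in> V" using w2.prems by auto
    then obtain s where s: "s \<in> S x" "s \<in> S y" using adj False Exy by blast
    obtain P where P: "is_path F P" "set P \<subseteq> S x" "hd P = t" "last P = s"
      using conn xV s w2.prems unfolding connected_set_def by force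
    obtain W where W: "walk F W" "hd W = s" "last W = t'" "\<forall>z\<in>set W. \<exists>v\<in>set (y # xs). z \<in> S v"
      using w2.IH[of s] w2.prems s by auto
    have "walk F (P @ W)" using walk_append[OF path_walk[OF P(1)] W(1)] P(4) W(2) by simp
    moreover have "P \<noteq> []" "W \<noteq> []" using P(1) W(1) walk_nonempty by (auto simp: is_path_def)
    ultimately show ?thesis using P W by (rule_tac x="P @ W" in exI) auto
  qed
qed

theorem lemma4:
  fixes V :: "'a set" and E :: "'a \<Rightarrow> 'a \<Rightarrow> bool"
    and N :: "'b set" and F :: "'b \<Rightarrow> 'b \<Rightarrow> bool" and S :: "'a \<Rightarrow> 'b set"
    and C C' C'' :: "'a set"
  assumes "simple_graph V E" and "chordal V E"
    and "subtree_model V E N F S"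
    and "maximal_clique V E C" and "maximal_clique V E C'" and "maximal_clique V E C''"
    and "C \<noteq> C'" and "C' \<noteq> C''" and "C \<noteq> C''"
    and "clique_subtree S C' \<inter>
           connecting_path F (clique_subtree S C) (clique_subtree S C'') \<noteq> {}"
  shows "separator V E C'"
proof -
  have tree: "is_tree N F" and conn: "\<forall>v\<in>V. connected_set F (S v)"
    and adj: "\<forall>u\<in>V. \<forall>v\<in>V. u \<noteq> v \<longrightarrow> (S u \<inter> S v \<noteq> {} \<longleftrightarrow> E u v)"
    using assms(3) unfolding subtree_model_def by auto
  have nocyc: "\<forall>xs. is_path F xs \<and> 3 \<le> length xs \<longrightarrow> \<not> F (last xs) (hd xs)"
    and sym: "\<forall>u v. F u v \<longrightarrow> F v u"
    using tree unfolding is_tree_def simple_graph_def by auto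
  obtain x where x1: "x \<in> clique_subtree S C'"
    and x2: "x \<in> connecting_path F (clique_subtree S C) (clique_subtree S C'')"
    using assms(10) by blast
  obtain P where P: "is_path F P" "hd P \<in> clique_subtree S C" "last P \<in> clique_subtree S C''"
    "x \<in> set P" using x2 unfolding connecting_path_def by blast
  have "\<not> C \<subseteq> C'" using assms(4,5,7) unfolding maximal_clique_def by blast
  then obtain u where u: "u \<in> C" "u \<notin> C'" by blast
  have "\<not> C'' \<subseteq> C'" using assms(5,6,8) unfolding maximal_clique_def by blast
  then obtain w where w: "w \<in> C''" "w \<notin> C'" by blast
  have CV: "C \<subseteq> V" "C' \<subseteq> V" "C'' \<subseteq> V" using assms(4,5,6) unfolding maximal_clique_def is_clique_def by auto
  have "\<not> (\<exists>xs. is_path E xs \<and> set xs \<subseteq> V - C' \<and> hd xs = u \<and> last xs = w)"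
  proof
    assume "\<exists>xs. is_path E xs \<and> set xs \<subseteq> V - C' \<and> hd xs = u \<and> last xs = w"
    then obtain xs where xs: "is_path E xs" "set xs \<subseteq> V - C'" "hd xs = u" "last xs = w" by blast
    have hP: "hd P \<in> S u" using P(2) u unfolding clique_subtree_def by auto
    have lP: "last P \<in> S w" using P(3) w unfolding clique_subtree_def by auto
    obtain W where W: "walk F W" "hd W = hd P" "last W = last P"
      "\<forall>z\<in>set W. \<exists>v\<in>set xs. z \<in> S v"
    proof -
      have "set xs \<subseteq> V" using xs(2) by auto
      then show ?thesis using graph_walk_tree_walk[OF conn adj path_walk[OF xs(1)], of "hd P" "last P"]
        xs hP lP that by blast
    qed
    have "set P \<subseteq> set W" using walk_covers_path[OF nocyc sym W(1) P(1)] W by simp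
    then obtain v where v: "v \<in> set xs" "x \<in> S v" using W(4) P(4) by blast
    have vV: "v \<in> V" "v \<notin> C'" using v xs(2) by auto
    have "is_clique V E (insert v C')"
      unfolding is_clique_def
    proof (intro conjI ballI impI)
      show "insert v C' \<subseteq> V" using vV CV by auto
    next
      fix a b assume ab: "a \<in> insert v C'" "b \<in> insert v C'" "a \<noteq> b"
      have xa: "x \<in> S a" using ab(1) v x1 unfolding clique_subtree_def by auto
      have xb: "x \<in> S b" using ab(2) v x1 unfolding clique_subtree_def by auto
      have "a \<in> V" "b \<in> V" using ab vV CV by auto
      then show "E a b" using adj xa xb ab(3) by blast
    qed
    then have "insert v C' = C'" using assms(5) unfolding maximal_clique_def by blast
    then show False using vV by blast
  qed
  then show ?thesis unfolding separator_def using u w CV by blast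
qed

end
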